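(* Fix $T>0$ and $\Delta t>0$ with $n=T/\Delta t$ an integer. Let $\widetilde{\mathcal S}_{\Delta t}=\mathcal C_h\circ\mathcal B_h\circ\mathcal A_{\Delta t}\circ\mathcal B_h\circ\mathcal C_h$ ($h=\Delta t/2$) be the discrete split-encoder update with at-most-one-jump likelihood described in the context, and $\mathcal S_{\Delta t}$ the exact one-step filtering semigroup. Assume $L^1$-stability: there is $L\ge0$ such that $\|\mathcal S_{\Delta t}(q_1)-\mathcal S_{\Delta t}(q_2)\|_1\le(1+L\Delta t)\|q_1-q_2\|_1$ for all normalized densities $q_1,q_2$; and assume the intensity of observation jumps larger than $\varepsilon>0$ is uniformly bounded by $\Lambda_\varepsilon$, so that (as in the local error theorem) there are constants $C_1,C_2>0$ independent of $\Delta t$ with $\|\widetilde{\mathcal S}_{\Delta t}(q)-\mathcal S_{\Delta t}(q)\|_1\le C_1\Delta t^2+C_2(\Lambda_\varepsilon\Delta t)^2$ for every normalized density $q$. Then there exists $C_T>0$, independent of $\Delta t$, such that for every normalized density $q$, $$\|\widetilde{\mathcal S}^{\,n}_{\Delta t}(q)-\mathcal S^{\,n}_{\Delta t}(q)\|_1\le C_T(1+\Lambda_\varepsilon^2)\Delta t.$$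
   Context: Setting: a partially observed jump-diffusion $dX_t=\mu(t,X_t,\Theta_t)dt+\sigma(t,X_t,\Theta_t)dW^X_t+\int\gamma(t,z,X_{t^-},\Theta_t)\widetilde N^X(dt,dz)$, $d\Theta_t=a(t,\Theta_t)dt+b(t,\Theta_t)dW^\Theta_t+\int k(t,\Theta_{t^-},z)\widetilde N^\Theta(dt,dz)$ (Brownian motions $W^X,W^\Theta$, compensated Poisson measures with compensators $\nu^X(dz)dt,\nu^\Theta(dz)dt$); only $X$ is observed. $\mathcal S_{\Delta t}$ maps the normalized filter density (conditional law of $\Theta$ given the observation history) at $t_k$ to that at $t_k+\Delta t$ given the observed increment $\Delta X_k$. The discrete update on a latent grid $\{\theta_j\}$ with spacing $\Delta\theta$: $\mathcal A_{\Delta t}$ applies a nonnegative Markov transition kernel $K_{\Delta t}$ (discretizing the generator of $\Theta$) plus a zero-total-mass residual correction, clips negatives to zero and renormalizes; $\mathcal B_h$ multiplies by $\mathcal N(\Delta X_k;\mu_\phi h,\sigma_\phi^2h)$ and renormalizes; $\mathcal C_h$ multiplies by $e^{-\lambda_\phi h}\mathcal N(\Delta X_k;\mu_\phi h,\sigma_\phi^2 h)+he^{-\lambda_\phi h}\int\mathcal N(\Delta X_k;\mu_\phi h+\gamma_\phi(z),\sigma_\phi^2h)\nu^X(dz)$ and renormalizes, where $\mu_\phi,\sigma_\phi,\lambda_\phi,\gamma_\phi$ are given coefficient functions of $(t_k,X_{t_k},\beta_k,\theta_j)$ and $\mathcal N(x;m,v)$ is the Gaussian density. Powers $\mathcal S^n$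 denote $n$-fold composition. *)

theory Defs
  imports "HOL-Analysis.Analysis"
begin

definition norm_density :: "'a measure \<Rightarrow> ('a \<Rightarrow> real) set" where
  "norm_density M = {q. q \<in> borel_measurable M \<and> (\<forall>x\<in>space M. 0 \<le> q x)
                        \<and> integrable M q \<and> integral\<^sup>L M q = 1}"

definition L1_dist :: "'a measure \<Rightarrow> ('a \<Rightarrow> real) \<Rightarrow> ('a \<Rightarrow> real) \<Rightarrow> real" where
  "L1_dist M q1 q2 = (\<integral>x. \<bar>q1 x - q2 x\<bar> \<partial>M)"

end

theory Submission
  imports Defs
begin

lemma L1_tri:
  assumes "f \<in> norm_density M" "g \<in> norm_density M" "h \<in> norm_density M"
  shows "L1_dist M f h \<le> L1_dist M f g + L1_dist M g h"
proof -
  have i: "integrable M f" "integrable M g" "integrable M h"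
    using assms by (auto simp: norm_density_def)
  have a: "integrable M (\<lambda>x. \<bar>f x - g x\<bar>)" "integrable M (\<lambda>x. \<bar>g x - h x\<bar>)"
    "integrable M (\<lambda>x. \<bar>f x - h x\<bar>)" using i by auto
  have "(\<integral>x. \<bar>f x - h x\<bar> \<partial>M) \<le> (\<integral>x. \<bar>f x - g x\<bar> + \<bar>g x - h x\<bar> \<partial>M)"
    by (rule integral_mono) (use a in auto)
  also have "\<dots> = (\<integral>x. \<bar>f x - g x\<bar> \<partial>M) + (\<integral>x. \<bar>g x - h x\<bar> \<partial>M)"
    using a(1,2) by (rule Bochner_Integration.integral_add)
  finally show ?thesis by (simp add: L1_dist_def)
qed

lemma iter_maps:
  assumes "\<And>q. q \<in> norm_density M \<Longrightarrow> F q \<in> norm_density M" "q \<in> norm_density M"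
  shows "(F ^^ k) q \<in> norm_density M"
  by (induction k) (use assms in auto)

theorem corollary1:
  fixes M :: "'a measure"
    and S St :: "real \<Rightarrow> ('a \<Rightarrow> real) \<Rightarrow> ('a \<Rightarrow> real)"
    and T L C1 C2 \<Lambda> :: real
  assumes T_pos: "T > 0"
    and L_nonneg: "L \<ge> 0"
    and C1_pos: "C1 > 0" and C2_pos: "C2 > 0"
    and Lambda_nonneg: "\<Lambda> \<ge> 0"
    and S_maps: "\<And>dt q. dt > 0 \<Longrightarrow> q \<in> norm_density M \<Longrightarrow> S dt q \<in> norm_density M"
    and St_maps: "\<And>dt q. dt > 0 \<Longrightarrow> q \<in> norm_density M \<Longrightarrow> St dt q \<in> norm_density M"
    and stable: "\<And>dt q1 q2. dt > 0 \<Longrightarrow> q1 \<in> norm_density M \<Longrightarrow> q2 \<in> norm_density M \<Longrightarrow>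
                   L1_dist M (S dt q1) (S dt q2) \<le> (1 + L * dt) * L1_dist M q1 q2"
    and local_err: "\<And>dt q. dt > 0 \<Longrightarrow> q \<in> norm_density M \<Longrightarrow>
                   L1_dist M (St dt q) (S dt q) \<le> C1 * dt\<^sup>2 + C2 * (\<Lambda> * dt)\<^sup>2"
  shows "\<exists>CT > 0. \<forall>dt > 0. \<forall>n::nat. real n * dt = T \<longrightarrow>
           (\<forall>q \<in> norm_density M.
              L1_dist M ((St dt ^^ n) q) ((S dt ^^ n) q) \<le> CT * (1 + \<Lambda>\<^sup>2) * dt)"
proof (intro exI[of _ "T * (C1 + C2) * exp (L * T)"] conjI allI impI ballI)
  show "0 < T * (C1 + C2) * exp (L * T)" using T_pos C1_pos C2_pos by simp
  fix dt :: real and n :: nat and q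
  assume dt: "dt > 0" and nT: "real n * dt = T" and q: "q \<in> norm_density M"
  define \<delta> where "\<delta> = C1 * dt\<^sup>2 + C2 * (\<Lambda> * dt)\<^sup>2"
  have d0: "\<delta> \<ge> 0" using C1_pos C2_pos unfolding \<delta>_def by simp
  have key: "L1_dist M ((St dt ^^ k) q) ((S dt ^^ k) q) \<le> real k * \<delta> * exp (L * dt * real k)" for k
  proof (induction k)
    case 0
    show ?case by (simp add: L1_dist_def)
  next
    case (Suc k)
    let ?a = "(St dt ^^ k) q" and ?b = "(S dt ^^ k) q"
    have ma: "?a \<in> norm_density M" by (rule iter_maps) (use St_maps dt q in auto)
    have mb: "?b \<in> norm_density M" by (rule iter_maps) (use S_maps dt q in auto)
    have "L1_dist M (St dt ?a) (S dt ?b) \<le> L1_dist M (St dt ?a) (S dt ?a) + L1_dist M (S dt ?a) (S dt ?b)"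
      by (rule L1_tri) (use ma mb St_maps S_maps dt in auto)
    also have "\<dots> \<le> \<delta> + (1 + L * dt) * L1_dist M ?a ?b"
      using local_err[OF dt ma] stable[OF dt ma mb] unfolding \<delta>_def by linarith
    also have "\<dots> \<le> \<delta> + exp (L * dt) * (real k * \<delta> * exp (L * dt * real k))"
    proof -
      have "1 + L * dt \<le> exp (L * dt)" by (rule exp_ge_add_one_self)
      moreover have "L1_dist M ?a ?b \<ge> 0" by (simp add: L1_dist_def)
      moreover have "1 + L * dt \<ge> 0" using L_nonneg dt by simp
      ultimately show ?thesis using Suc.IH
        by (smt (verit) mult_mono exp_gt_zero)
    qed
    also have "\<dots> = \<delta> + real k * \<delta> * exp (L * dt * real (Suc k))"
      by (simp add: exp_add[symmetric] algebra_simps)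
    also have "\<dots> \<le> \<delta> * exp (L * dt * real (Suc k)) + real k * \<delta> * exp (L * dt * real (Suc k))"
    proof -
      have "1 \<le> exp (L * dt * real (Suc k))" using L_nonneg dt by simp
      then have "\<delta> * 1 \<le> \<delta> * exp (L * dt * real (Suc k))" using d0 by (rule mult_left_mono)
      then show ?thesis by simp
    qed
    also have "\<dots> = real (Suc k) * \<delta> * exp (L * dt * real (Suc k))"
      by (simp add: algebra_simps)
    finally show ?case by simp
  qed
  have "\<delta> \<le> (C1 + C2) * (1 + \<Lambda>\<^sup>2) * dt\<^sup>2"
    unfolding \<delta>_def using C1_pos C2_pos
    by (simp add: algebra_simps power_mult_distrib)
  then have "real n * \<delta> * exp (L * dt * real n) \<le> real n * ((C1 + C2) * (1 + \<Lambda>\<^sup>2) * dt\<^sup>2) * exp (L * T)"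
  proof -
    have e: "exp (L * dt * real n) = exp (L * T)" using nT by (simp add: algebra_simps)
    have "real n * \<delta> \<le> real n * ((C1 + C2) * (1 + \<Lambda>\<^sup>2) * dt\<^sup>2)"
      using \<open>\<delta> \<le> _\<close> by (rule mult_left_mono) simp
    then show ?thesis unfolding e by (rule mult_right_mono) simp
  qed
  also have "\<dots> = T * (C1 + C2) * exp (L * T) * (1 + \<Lambda>\<^sup>2) * dt"
    using nT[symmetric] by (simp add: power2_eq_square algebra_simps)
  finally show "L1_dist M ((St dt ^^ n) q) ((S dt ^^ n) q) \<le> T * (C1 + C2) * exp (L * T) * (1 + \<Lambda>\<^sup>2) * dt"
    using key[of n] by linarith
qed

end
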